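(* Let $M$ be a representation of $A$ and $L$ a vertex subrepresentation of $M$. Then $$\mathsf{F}_L(M)=\mathsf{F}_0(M/L)\cap\mathsf{F}_L(L).$$
   Context: $A=kQ/I$ finite-dimensional basic over algebraically closed $k$ of characteristic 0. $\mathsf{N}(M)$ is the convex hull in $\mathbb{R}^{Q_0}$ of dimension vectors of subrepresentations of $M$. For each vertex $\gamma$ of $\mathsf{N}(M)$ there is a unique subrepresentation of $M$ of dimension $\gamma$, called a vertex subrepresentation. For a vertex subrepresentation $L$ of $M$, $\mathsf{F}_L(M)$ denotes the dual (normal) cone of the vertex $\underline{\dim}L$: the cone of $\delta\in\mathbb{R}^{Q_0}$ with $\delta(\underline{\dim}L)=\max_{x\in\mathsf{N}(M)}\delta(x)$, where $\delta(\gamma)=\sum_v\delta(v)\gamma(v)$. Thus $\mathsf{F}_0(N)$ and $\mathsf{F}_N(N)$ are the dual cones of the vertices $0$ and $\underline{\dim}N$ of $\mathsf{N}(N)$. *)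

theory Defs
  imports "HOL-Analysis.Analysis" "HOL-Computational_Algebra.Polynomial"
begin

text \<open>Finite quiver: vertices = UNIV of a finite type 'q, arrows = UNIV of a finite
type 'e, with source/target maps src, tgt.  A path is a triple (x, y, ps):
start vertex x, end vertex y, list of arrows ps (first arrow first).\<close>

definition valid_path :: "('e \<Rightarrow> 'q) \<Rightarrow> ('e \<Rightarrow> 'q) \<Rightarrow> 'q \<times> 'q \<times> 'e list \<Rightarrow> bool" where
  "valid_path src tgt p = (case p of (x, y, ps) \<Rightarrow>
     (ps = [] \<longrightarrow> x = y) \<and>
     (ps \<noteq> [] \<longrightarrow> src (hd ps) = x \<and> tgt (last ps) = y \<and>
        (\<forall>i. Suc i < length ps \<longrightarrow> tgt (ps ! i) = src (ps ! Suc i))))"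

text \<open>Elements of the path algebra kQ: finitely supported k-linear combinations of paths.\<close>
definition path_elem :: "('e \<Rightarrow> 'q) \<Rightarrow> ('e \<Rightarrow> 'q) \<Rightarrow> ('q \<times> 'q \<times> 'e list \<Rightarrow> 'k::field) \<Rightarrow> bool" where
  "path_elem src tgt f \<longleftrightarrow> finite {p. f p \<noteq> 0} \<and> (\<forall>p. f p \<noteq> 0 \<longrightarrow> valid_path src tgt p)"

text \<open>Multiplication in kQ (concatenation of paths: first f, then g).\<close>
definition pmult :: "('q::finite \<times> 'q \<times> 'e list \<Rightarrow> 'k::field) \<Rightarrow> ('q \<times> 'q \<times> 'e list \<Rightarrow> 'k)
    \<Rightarrow> 'q \<times> 'q \<times> 'e list \<Rightarrow> 'k" where
  "pmult f g p = (case p of (x, y, ps) \<Rightarrow>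
     (\<Sum>z\<in>UNIV. \<Sum>i\<in>{0..length ps}. f (x, z, take i ps) * g (z, y, drop i ps)))"

definition path_ideal :: "('e \<Rightarrow> 'q::finite) \<Rightarrow> ('e \<Rightarrow> 'q) \<Rightarrow> ('q \<times> 'q \<times> 'e list \<Rightarrow> 'k::field) set \<Rightarrow> bool" where
  "path_ideal src tgt I \<longleftrightarrow>
     (\<forall>f\<in>I. path_elem src tgt f) \<and> (\<lambda>_. 0) \<in> I \<and>
     (\<forall>f\<in>I. \<forall>g\<in>I. (\<lambda>p. f p + g p) \<in> I) \<and>
     (\<forall>f\<in>I. \<forall>c. (\<lambda>p. c * f p) \<in> I) \<and>
     (\<forall>f\<in>I. \<forall>g. path_elem src tgt g \<longrightarrow> pmult f g \<in> I \<and> pmult g f \<in> I)"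

text \<open>Admissible ideal: R^m \<subseteq> I \<subseteq> R^2, R the arrow ideal (R^m = span of paths of length \<ge> m).\<close>
definition admissible_ideal :: "('e \<Rightarrow> 'q::finite) \<Rightarrow> ('e \<Rightarrow> 'q) \<Rightarrow> ('q \<times> 'q \<times> 'e list \<Rightarrow> 'k::field) set \<Rightarrow> bool" where
  "admissible_ideal src tgt I \<longleftrightarrow> path_ideal src tgt I \<and>
     (\<exists>m\<ge>2. \<forall>f. path_elem src tgt f \<and> (\<forall>x y ps. f (x, y, ps) \<noteq> 0 \<longrightarrow> length ps \<ge> m) \<longrightarrow> f \<in> I) \<and>
     (\<forall>f\<in>I. \<forall>x y ps. f (x, y, ps) \<noteq> 0 \<longrightarrow> length ps \<ge> 2)"

text \<open>A representation (M, phi): finite-dimensional subspaces M v of an ambient k-vector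
space, linear maps phi a : M (src a) \<rightarrow> M (tgt a).\<close>

definition path_map :: "('e \<Rightarrow> 'm \<Rightarrow> 'm) \<Rightarrow> 'e list \<Rightarrow> 'm \<Rightarrow> 'm" where
  "path_map phi ps = fold (\<lambda>a g. phi a \<circ> g) ps id"

definition is_quiver_rep :: "('k::field \<Rightarrow> 'm::ab_group_add \<Rightarrow> 'm) \<Rightarrow> ('e \<Rightarrow> 'q) \<Rightarrow> ('e \<Rightarrow> 'q)
    \<Rightarrow> ('q \<Rightarrow> 'm set) \<Rightarrow> ('e \<Rightarrow> 'm \<Rightarrow> 'm) \<Rightarrow> bool" where
  "is_quiver_rep smul src tgt M phi \<longleftrightarrow>
     (\<forall>v. module.subspace smul (M v) \<and>
          (\<exists>B. finite B \<and> B \<subseteq> M v \<and> module.span smul B = M v)) \<and>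
     (\<forall>a. phi a ` M (src a) \<subseteq> M (tgt a) \<and>
          (\<forall>x\<in>M (src a). \<forall>y\<in>M (src a). phi a (x + y) = phi a x + phi a y) \<and>
          (\<forall>c. \<forall>x\<in>M (src a). phi a (smul c x) = smul c (phi a x)))"

text \<open>A representation of A = kQ/I: a representation of Q annihilated by I.\<close>
definition is_rep :: "('k::field \<Rightarrow> 'm::ab_group_add \<Rightarrow> 'm) \<Rightarrow> ('e \<Rightarrow> 'q) \<Rightarrow> ('e \<Rightarrow> 'q)
    \<Rightarrow> ('q \<times> 'q \<times> 'e list \<Rightarrow> 'k) set \<Rightarrow> ('q \<Rightarrow> 'm set) \<Rightarrow> ('e \<Rightarrow> 'm \<Rightarrow> 'm) \<Rightarrow> bool" where
  "is_rep smul src tgt I M phi \<longleftrightarrow> is_quiver_rep smul src tgt M phi \<and>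
     (\<forall>f\<in>I. \<forall>x y. \<forall>m\<in>M x.
        (\<Sum>ps\<in>{ps. f (x, y, ps) \<noteq> 0}. smul (f (x, y, ps)) (path_map phi ps m)) = 0)"

definition subrep :: "('k::field \<Rightarrow> 'm::ab_group_add \<Rightarrow> 'm) \<Rightarrow> ('e \<Rightarrow> 'q) \<Rightarrow> ('e \<Rightarrow> 'q)
    \<Rightarrow> ('q \<Rightarrow> 'm set) \<Rightarrow> ('e \<Rightarrow> 'm \<Rightarrow> 'm) \<Rightarrow> ('q \<Rightarrow> 'm set) \<Rightarrow> bool" where
  "subrep smul src tgt M phi U \<longleftrightarrow>
     (\<forall>v. module.subspace smul (U v) \<and> U v \<subseteq> M v) \<and>
     (\<forall>a. phi a ` U (src a) \<subseteq> U (tgt a))"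

definition dimvec :: "('k::field \<Rightarrow> 'm::ab_group_add \<Rightarrow> 'm) \<Rightarrow> ('q::finite \<Rightarrow> 'm set) \<Rightarrow> real ^ 'q" where
  "dimvec smul U = (\<chi> v. real (vector_space.dim smul (U v)))"

definition newton :: "('k::field \<Rightarrow> 'm::ab_group_add \<Rightarrow> 'm) \<Rightarrow> ('e \<Rightarrow> 'q::finite) \<Rightarrow> ('e \<Rightarrow> 'q)
    \<Rightarrow> ('q \<Rightarrow> 'm set) \<Rightarrow> ('e \<Rightarrow> 'm \<Rightarrow> 'm) \<Rightarrow> (real ^ 'q) set" where
  "newton smul src tgt M phi = convex hull {dimvec smul U | U. subrep smul src tgt M phi U}"

definition normal_cone :: "('k::field \<Rightarrow> 'm::ab_group_add \<Rightarrow> 'm) \<Rightarrow> ('e \<Rightarrow> 'q::finite) \<Rightarrow> ('e \<Rightarrow> 'q)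
    \<Rightarrow> ('q \<Rightarrow> 'm set) \<Rightarrow> ('e \<Rightarrow> 'm \<Rightarrow> 'm) \<Rightarrow> real ^ 'q \<Rightarrow> (real ^ 'q) set" where
  "normal_cone smul src tgt M phi \<gamma> =
     {\<delta>. \<forall>x\<in>newton smul src tgt M phi. \<delta> \<bullet> x \<le> \<delta> \<bullet> \<gamma>}"

definition vertex_subrep :: "('k::field \<Rightarrow> 'm::ab_group_add \<Rightarrow> 'm) \<Rightarrow> ('e \<Rightarrow> 'q::finite) \<Rightarrow> ('e \<Rightarrow> 'q)
    \<Rightarrow> ('q \<Rightarrow> 'm set) \<Rightarrow> ('e \<Rightarrow> 'm \<Rightarrow> 'm) \<Rightarrow> ('q \<Rightarrow> 'm set) \<Rightarrow> bool" where
  "vertex_subrep smul src tgt M phi L \<longleftrightarrow> subrep smul src tgt M phi L \<and>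
     dimvec smul L extreme_point_of newton smul src tgt M phi"

text \<open>Quotient representation M/L, realised (up to isomorphism) on a chosen complement
C v of L v in M v, with maps phi a followed by the projection onto C (tgt a) along L (tgt a).\<close>
definition qspace :: "('k::field \<Rightarrow> 'm::ab_group_add \<Rightarrow> 'm) \<Rightarrow> ('q \<Rightarrow> 'm set) \<Rightarrow> ('q \<Rightarrow> 'm set) \<Rightarrow> 'q \<Rightarrow> 'm set" where
  "qspace smul M L v = (SOME C. module.subspace smul C \<and> C \<subseteq> M v \<and> C \<inter> L v = {0} \<and>
        (\<forall>m\<in>M v. \<exists>c\<in>C. \<exists>l\<in>L v. m = c + l))"

definition qproj :: "('k::field \<Rightarrow> 'm::ab_group_add \<Rightarrow> 'm) \<Rightarrow> ('q \<Rightarrow> 'm set) \<Rightarrow> ('q \<Rightarrow> 'm set) \<Rightarrow> 'q \<Rightarrow> 'm \<Rightarrow> 'm" where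
  "qproj smul M L v m = (THE c. c \<in> qspace smul M L v \<and> m - c \<in> L v)"

definition qmap :: "('k::field \<Rightarrow> 'm::ab_group_add \<Rightarrow> 'm) \<Rightarrow> ('e \<Rightarrow> 'q) \<Rightarrow> ('q \<Rightarrow> 'm set)
    \<Rightarrow> ('e \<Rightarrow> 'm \<Rightarrow> 'm) \<Rightarrow> ('q \<Rightarrow> 'm set) \<Rightarrow> 'e \<Rightarrow> 'm \<Rightarrow> 'm" where
  "qmap smul tgt M phi L a c = qproj smul M L (tgt a) (phi a c)"

end

theory Submission imports Defs begin

context vector_space begin

lemma span_disj_zero:
  assumes "independent B" "finite B" "X \<subseteq> B" "Y \<subseteq> B" "X \<inter> Y = {}"
    "x \<in> span X" "x \<in> span Y"
  shows "x = 0"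
proof -
  have fX: "finite X" "finite Y" using assms(2,3,4) by (auto intro: finite_subset)
  obtain u where u: "x = (\<Sum>v\<in>X. u v *s v)" using assms(6) span_finite[OF fX(1)] by auto
  obtain w where w: "x = (\<Sum>v\<in>Y. w v *s v)" using assms(7) span_finite[OF fX(2)] by auto
  define g where "g v = (if v \<in> X then u v else - w v)" for v
  have "(\<Sum>v\<in>X \<union> Y. g v *s v) = (\<Sum>v\<in>X. g v *s v) + (\<Sum>v\<in>Y. g v *s v)"
    using fX assms(5) by (simp add: sum.union_disjoint)
  also have "(\<Sum>v\<in>X. g v *s v) = x" unfolding u g_def by (rule sum.cong) auto
  also have "(\<Sum>v\<in>Y. g v *s v) = (\<Sum>v\<in>Y. - (w v *s v))"
    using assms(5) by (intro sum.cong) (auto simp: g_def)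
  also have "\<dots> = - x" by (simp add: sum_negf w)
  finally have z: "(\<Sum>v\<in>X \<union> Y. g v *s v) = 0" by simp
  have "\<forall>v\<in>X. u v = 0"
  proof
    fix v assume "v \<in> X"
    hence "g v = 0" using independentD[OF assms(1) _ _ z] fX assms(3,4) by auto
    thus "u v = 0" using \<open>v \<in> X\<close> by (simp add: g_def)
  qed
  thus ?thesis unfolding u by simp
qed

lemma union_indep:
  assumes "independent A" "independent B" "finite A" "finite B"
    "span A \<inter> span B \<subseteq> {0}"
  shows "independent (A \<union> B)" "A \<inter> B = {}"
proof -
  show dj: "A \<inter> B = {}"
  proof (rule ccontr)
    assume "A \<inter> B \<noteq> {}"
    then obtain v where "v \<in> A" "v \<in> B" by auto
    hence "v = 0" using assms(5) span_base by blast
    thus False using \<open>v \<in> A\<close> assms(1) dependent_zero by blast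
  qed
  show "independent (A \<union> B)"
  proof (rule independent_if_scalars_zero)
    show "finite (A \<union> B)" using assms by auto
    fix f x assume s: "(\<Sum>x\<in>A \<union> B. f x *s x) = 0" and x: "x \<in> A \<union> B"
    have "(\<Sum>x\<in>A \<union> B. f x *s x) = (\<Sum>x\<in>A. f x *s x) + (\<Sum>x\<in>B. f x *s x)"
      using assms dj by (simp add: sum.union_disjoint)
    hence e: "(\<Sum>x\<in>A. f x *s x) = - (\<Sum>x\<in>B. f x *s x)" using s by (simp add: eq_neg_iff_add_eq_0)
    have "(\<Sum>x\<in>A. f x *s x) \<in> span A" by (simp add: span_base span_scale span_sum)
    moreover have "(\<Sum>x\<in>A. f x *s x) \<in> span B" unfolding e
      by (simp add: span_base span_scale span_sum span_neg)
    ultimately have a0: "(\<Sum>x\<in>A. f x *s x) = 0" using assms(5) by blast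
    hence b0: "(\<Sum>x\<in>B. f x *s x) = 0" using e by simp
    show "f x = 0" using x independentD[OF assms(1) assms(3) order_refl a0, of x]
      independentD[OF assms(2) assms(4) order_refl b0, of x] by blast
  qed
qed

lemma dim_direct_sum:
  assumes "subspace S" "subspace T" "S \<subseteq> span F" "T \<subseteq> span F" "finite F"
    "S \<inter> T \<subseteq> {0}"
  shows "dim {x + y |x y. x \<in> S \<and> y \<in> T} = dim S + dim T"
proof -
  obtain A where A: "A \<subseteq> S" "independent A" "S \<subseteq> span A" "card A = dim S"
    by (rule basis_exists)
  obtain B where B: "B \<subseteq> T" "independent B" "T \<subseteq> span B" "card B = dim T"
    by (rule basis_exists)
  have fA: "finite A" using independent_span_bound[OF assms(5) A(2)] A(1) assms(3) by auto
  have fB: "finite B" using independent_span_bound[OF assms(5) B(2)] B(1) assms(4) by auto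
  have sA: "span A = S" using span_subspace[OF A(1) A(3) assms(1)] .
  have sB: "span B = T" using span_subspace[OF B(1) B(3) assms(2)] .
  have i: "independent (A \<union> B)" "A \<inter> B = {}"
    using union_indep[OF A(2) B(2) fA fB] assms(6) unfolding sA sB by simp_all
  have sp: "span (A \<union> B) = {x + y |x y. x \<in> S \<and> y \<in> T}"
    using span_Un[of A B] sA sB by simp
  have "dim {x + y |x y. x \<in> S \<and> y \<in> T} = card (A \<union> B)"
  proof -
    have ss: "subspace {x + y |x y. x \<in> S \<and> y \<in> T}" by (rule subspace_sums[OF assms(1,2)])
    have "span (A \<union> B) = span {x + y |x y. x \<in> S \<and> y \<in> T}"
      unfolding sp span_eq_iff[THEN iffD2, OF ss] ..
    thus ?thesis by (rule dim_eq_card[OF _ i(1)])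
  qed
  also have "\<dots> = dim S + dim T" using card_Un_disjoint[OF fA fB i(2)] A B by simp
  finally show ?thesis .
qed

lemma complement_exists:
  assumes "subspace S" "subspace U" "S \<subseteq> U" "U \<subseteq> span F" "finite F"
  shows "\<exists>D. subspace D \<and> D \<subseteq> U \<and> D \<inter> S \<subseteq> {0} \<and> {x + y |x y. x \<in> D \<and> y \<in> S} = U"
proof -
  obtain B0 where B0: "B0 \<subseteq> S" "independent B0" "S \<subseteq> span B0" "card B0 = dim S"
    by (rule basis_exists)
  obtain B where B: "B0 \<subseteq> B" "B \<subseteq> U" "independent B" "U \<subseteq> span B"
  proof -
    have "B0 \<subseteq> U" using B0(1) assms(3) by (rule order.trans)
    from maximal_independent_subset_extend[OF this B0(2)] show ?thesis using that .
  qed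
  have fB: "finite B" using independent_span_bound[OF assms(5) B(3)] B(2) assms(4) by auto
  have sB0: "span B0 = S" using span_subspace[OF B0(1) B0(3) assms(1)] .
  have sB: "span B = U" using span_subspace[OF B(2) B(4) assms(2)] .
  define D where "D = span (B - B0)"
  have d1: "subspace D" unfolding D_def by simp
  have d2: "D \<subseteq> U" unfolding D_def using span_mono[of "B - B0" B] sB by blast
  have d3: "D \<inter> S \<subseteq> {0}"
  proof
    fix x assume "x \<in> D \<inter> S"
    hence "x \<in> span (B - B0)" "x \<in> span B0" unfolding D_def sB0 by auto
    hence "x = 0" using span_disj_zero[OF B(3) fB, of "B - B0" B0 x] B(1) by blast
    thus "x \<in> {0}" by simp
  qed
  have d4: "{x + y |x y. x \<in> D \<and> y \<in> S} = U"
  proof -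
    have "B - B0 \<union> B0 = B" using B(1) by auto
    hence "span (B - B0 \<union> B0) = U" using sB by simp
    thus ?thesis unfolding span_Un[of "B - B0" B0] sB0 D_def .
  qed
  have "subspace D \<and> D \<subseteq> U \<and> D \<inter> S \<subseteq> {0} \<and> {x + y |x y. x \<in> D \<and> y \<in> S} = U"
    using d1 d2 d3 d4 by (intro conjI)
  thus ?thesis by (rule exI)
qed

end

locale qsetup = vector_space smul
  for smul :: "'k::field \<Rightarrow> 'm::ab_group_add \<Rightarrow> 'm" +
  fixes src tgt :: "'e \<Rightarrow> 'q::finite" and M L :: "'q \<Rightarrow> 'm set" and phi :: "'e \<Rightarrow> 'm \<Rightarrow> 'm"
  assumes Msub: "\<And>v. subspace (M v)"
    and Mfin: "\<And>v. \<exists>B. finite B \<and> B \<subseteq> M v \<and> span B = M v"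
    and phiM: "\<And>a x. x \<in> M (src a) \<Longrightarrow> phi a x \<in> M (tgt a)"
    and phiadd: "\<And>a x y. x \<in> M (src a) \<Longrightarrow> y \<in> M (src a) \<Longrightarrow> phi a (x + y) = phi a x + phi a y"
    and Lrep: "subrep smul src tgt M phi L"
begin

abbreviation "C \<equiv> qspace smul M L"
abbreviation "P \<equiv> qproj smul M L"
abbreviation "Q \<equiv> qmap smul tgt M phi L"

lemma Lsub: "subspace (L v)" "L v \<subseteq> M v"
  using Lrep unfolding subrep_def by auto

lemma Lphi: "x \<in> L (src a) \<Longrightarrow> phi a x \<in> L (tgt a)"
  using Lrep unfolding subrep_def by (auto simp: image_subset_iff)

lemma Mspan: obtains F where "finite F" "M v \<subseteq> span F"
proof -
  obtain B where "finite B" "B \<subseteq> M v" "span B = M v" using Mfin[of v] by auto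
  thus ?thesis using that by auto
qed

lemma C_props: "subspace (C v) \<and> C v \<subseteq> M v \<and> C v \<inter> L v = {0} \<and> (\<forall>m\<in>M v. \<exists>c\<in>C v. \<exists>l\<in>L v. m = c + l)"
proof -
  obtain F where F: "finite F" "M v \<subseteq> span F" by (rule Mspan)
  obtain D where D: "subspace D" "D \<subseteq> M v" "D \<inter> L v \<subseteq> {0}" "{x + y |x y. x \<in> D \<and> y \<in> L v} = M v"
    using complement_exists[OF Lsub(1) Msub Lsub(2) F(2) F(1)] by auto
  have "D \<inter> L v = {0}" using D(3) subspace_0[OF D(1)] subspace_0[OF Lsub(1)] by auto
  moreover have "\<forall>m\<in>M v. \<exists>c\<in>D. \<exists>l\<in>L v. m = c + l"
  proof
    fix m assume "m \<in> M v"
    hence "m \<in> {x + y |x y. x \<in> D \<and> y \<in> L v}" using D(4) by simp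
    thus "\<exists>c\<in>D. \<exists>l\<in>L v. m = c + l" by auto
  qed
  ultimately have "subspace D \<and> D \<subseteq> M v \<and> D \<inter> L v = {0} \<and> (\<forall>m\<in>M v. \<exists>c\<in>D. \<exists>l\<in>L v. m = c + l)"
    using D(1,2) by simp
  thus ?thesis unfolding qspace_def by (rule someI)
qed

lemma C_sub: "subspace (C v)" and C_M: "C v \<subseteq> M v" and C_L: "C v \<inter> L v = {0}"
  and C_dec: "m \<in> M v \<Longrightarrow> \<exists>c\<in>C v. \<exists>l\<in>L v. m = c + l"
  using C_props[of v] by auto

lemma P_unique: assumes "c \<in> C v" "m - c \<in> L v" shows "P v m = c"
  unfolding qproj_def
proof (rule the_equality)
  show "c \<in> C v \<and> m - c \<in> L v" using assms by simp
next
  fix c' assume c': "c' \<in> C v \<and> m - c' \<in> L v"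
  have "c' - c = (m - c) - (m - c')" by (simp add: algebra_simps)
  moreover have "(m - c) - (m - c') \<in> L v" using c' by (intro subspace_diff[OF Lsub(1) assms(2)]) simp
  ultimately have "c' - c \<in> L v" by metis
  moreover have "c' - c \<in> C v" using subspace_diff[OF C_sub] c' assms(1) by simp
  ultimately have "c' - c \<in> {0}" using C_L[of v] by blast
  thus "c' = c" by simp
qed

lemma P_props: assumes "m \<in> M v" shows "P v m \<in> C v" "m - P v m \<in> L v"
proof -
  obtain c l where cl: "c \<in> C v" "l \<in> L v" "m = c + l" using C_dec[OF assms] by blast
  have "m - c \<in> L v" using cl by simp
  hence "P v m = c" using P_unique cl(1) by blast
  thus "P v m \<in> C v" "m - P v m \<in> L v" using cl by auto
qed

lemma P_diff: assumes "x \<in> M v" "y \<in> M v" shows "P v (x - y) = P v x - P v y"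
proof (rule P_unique)
  show "P v x - P v y \<in> C v" using subspace_diff[OF C_sub] P_props assms by blast
  have "x - y - (P v x - P v y) = (x - P v x) - (y - P v y)" by (simp add: algebra_simps)
  thus "x - y - (P v x - P v y) \<in> L v" using subspace_diff[OF Lsub(1)] P_props assms by metis
qed

lemma P_add: assumes "x \<in> M v" "y \<in> M v" shows "P v (x + y) = P v x + P v y"
proof (rule P_unique)
  show "P v x + P v y \<in> C v" using subspace_add[OF C_sub] P_props assms by blast
  have "x + y - (P v x + P v y) = (x - P v x) + (y - P v y)" by (simp add: algebra_simps)
  thus "x + y - (P v x + P v y) \<in> L v" using subspace_add[OF Lsub(1)] P_props assms by metis
qed

lemma P_scale: assumes "x \<in> M v" shows "P v (smul c x) = smul c (P v x)"
proof (rule P_unique)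
  show "smul c (P v x) \<in> C v" using subspace_scale[OF C_sub] P_props assms by blast
  have "smul c x - smul c (P v x) = smul c (x - P v x)" by (simp add: scale_right_diff_distrib)
  thus "smul c x - smul c (P v x) \<in> L v" using subspace_scale[OF Lsub(1)] P_props assms by metis
qed

lemma P_L: assumes "l \<in> L v" shows "P v l = 0"
  by (rule P_unique) (simp_all add: subspace_0[OF C_sub] assms)

lemma K3: "subrep smul src tgt L phi U \<Longrightarrow> subrep smul src tgt M phi U"
  unfolding subrep_def using Lsub(2) by (meson order.trans)

lemma K1: assumes V: "subrep smul src tgt C Q V"
  shows "\<exists>W. subrep smul src tgt M phi W \<and> dimvec smul W = dimvec smul V + dimvec smul L"
proof -
  have Vs: "\<And>v. subspace (V v)" "\<And>v. V v \<subseteq> C v" and Vphi: "\<And>a x. x \<in> V (src a) \<Longrightarrow> Q a x \<in> V (tgt a)"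
    using V unfolding subrep_def by (auto simp: image_subset_iff)
  define W where "W v = {x + y |x y. x \<in> V v \<and> y \<in> L v}" for v
  have VM: "x \<in> V v \<Longrightarrow> x \<in> M v" for x v using Vs(2) C_M by blast
  have "subrep smul src tgt M phi W" unfolding subrep_def
  proof (intro conjI allI)
    fix v show "subspace (W v)" unfolding W_def by (rule subspace_sums[OF Vs(1) Lsub(1)])
    show "W v \<subseteq> M v"
    proof
      fix z assume "z \<in> W v"
      then obtain x y where "z = x + y" "x \<in> V v" "y \<in> L v" unfolding W_def by blast
      have "x \<in> M v" "y \<in> M v" using VM \<open>x \<in> V v\<close> Lsub(2) \<open>y \<in> L v\<close> by auto
      thus "z \<in> M v" using subspace_add[OF Msub] \<open>z = x + y\<close> by simp
    qed
  next
    fix a show "phi a ` W (src a) \<subseteq> W (tgt a)"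
    proof
      fix w assume "w \<in> phi a ` W (src a)"
      then obtain z where z: "z \<in> W (src a)" "w = phi a z" by blast
      then obtain x y where xy: "z = x + y" "x \<in> V (src a)" "y \<in> L (src a)" unfolding W_def by blast
      have xM: "x \<in> M (src a)" using VM xy(2) .
      have yM: "y \<in> M (src a)" using Lsub(2) xy(3) by blast
      have e: "phi a z = phi a x + phi a y" using phiadd[OF xM yM] xy(1) by simp
      define q where "q = Q a x"
      have q: "q = P (tgt a) (phi a x)" unfolding q_def qmap_def ..
      have qV: "q \<in> V (tgt a)" unfolding q_def by (rule Vphi[OF xy(2)])
      have l1: "phi a x - q \<in> L (tgt a)" unfolding q using P_props(2)[OF phiM[OF xM]] .
      have l2: "(phi a x - q) + phi a y \<in> L (tgt a)"
        using subspace_add[OF Lsub(1) l1 Lphi[OF xy(3)]] .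
      have "w = q + ((phi a x - q) + phi a y)" using z(2) e by (simp add: algebra_simps)
      thus "w \<in> W (tgt a)" unfolding W_def using qV l2 by blast
    qed
  qed
  moreover have "dim (W v) = dim (V v) + dim (L v)" for v
  proof -
    obtain F where F: "finite F" "M v \<subseteq> span F" by (rule Mspan)
    have "V v \<subseteq> span F" using VM F(2) by blast
    moreover have "L v \<subseteq> span F" using Lsub(2) F(2) by blast
    moreover have "V v \<inter> L v \<subseteq> {0}" using Vs(2)[of v] C_L[of v] by auto
    ultimately show ?thesis unfolding W_def by (rule dim_direct_sum[OF Vs(1) Lsub(1) _ _ F(1)])
  qed
  hence "dimvec smul W = dimvec smul V + dimvec smul L"
    unfolding dimvec_def by (simp add: vec_eq_iff)
  ultimately show ?thesis by (intro exI[of _ W] conjI)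
qed


lemma K2: assumes U: "subrep smul src tgt M phi U"
  shows "\<exists>U' V. subrep smul src tgt L phi U' \<and> subrep smul src tgt C Q V \<and>
           dimvec smul U = dimvec smul U' + dimvec smul V"
proof -
  have Us: "\<And>v. subspace (U v)" "\<And>v. U v \<subseteq> M v" and Uphi: "\<And>a x. x \<in> U (src a) \<Longrightarrow> phi a x \<in> U (tgt a)"
    using U unfolding subrep_def by (auto simp: image_subset_iff)
  have UM: "x \<in> U v \<Longrightarrow> x \<in> M v" for x v using Us(2) by blast
  define U' where "U' v = U v \<inter> L v" for v
  define V where "V v = P v ` U v" for v
  have U's: "subspace (U' v)" for v unfolding U'_def by (rule subspace_inter[OF Us(1) Lsub(1)])
  have r1: "subrep smul src tgt L phi U'" unfolding subrep_def
  proof (intro conjI allI)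
    fix v show "subspace (U' v)" by (rule U's)
    show "U' v \<subseteq> L v" unfolding U'_def by blast
  next
    fix a show "phi a ` U' (src a) \<subseteq> U' (tgt a)" unfolding U'_def
      using Uphi Lphi by auto
  qed
  have Vs: "subspace (V v)" for v
  proof (rule subspaceI)
    have "P v 0 = 0" by (rule P_L[OF subspace_0[OF Lsub(1)]])
    thus "0 \<in> V v" unfolding V_def using subspace_0[OF Us(1)] by (metis image_eqI)
  next
    fix x y assume "x \<in> V v" "y \<in> V v"
    then obtain u w where "u \<in> U v" "w \<in> U v" "x = P v u" "y = P v w" unfolding V_def by blast
    moreover have "P v (u + w) = P v u + P v w" using P_add UM \<open>u \<in> U v\<close> \<open>w \<in> U v\<close> by blast
    moreover have "u + w \<in> U v" using subspace_add[OF Us(1)] \<open>u \<in> U v\<close> \<open>w \<in> U v\<close> by blast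
    ultimately show "x + y \<in> V v" unfolding V_def by (metis image_eqI)
  next
    fix c x assume "x \<in> V v"
    then obtain u where "u \<in> U v" "x = P v u" unfolding V_def by blast
    moreover have "P v (smul c u) = smul c (P v u)" using P_scale UM \<open>u \<in> U v\<close> by blast
    moreover have "smul c u \<in> U v" using subspace_scale[OF Us(1)] \<open>u \<in> U v\<close> by blast
    ultimately show "smul c x \<in> V v" unfolding V_def by (metis image_eqI)
  qed
  have VC: "V v \<subseteq> C v" for v unfolding V_def using P_props(1) UM by blast
  have r2: "subrep smul src tgt C Q V" unfolding subrep_def
  proof (intro conjI allI)
    fix v show "subspace (V v)" by (rule Vs)
    show "V v \<subseteq> C v" by (rule VC)
  next
    fix a show "Q a ` V (src a) \<subseteq> V (tgt a)"
    proof
      fix z assume "z \<in> Q a ` V (src a)"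
      then obtain u where u: "u \<in> U (src a)" "z = Q a (P (src a) u)" unfolding V_def by blast
      define x where "x = P (src a) u"
      define l where "l = u - x"
      have uM: "u \<in> M (src a)" using UM u(1) .
      have xM: "x \<in> M (src a)" unfolding x_def using P_props(1)[OF uM] C_M by blast
      have lL: "l \<in> L (src a)" unfolding l_def x_def using P_props(2)[OF uM] .
      have lM: "l \<in> M (src a)" using lL Lsub(2) by blast
      have "phi a u = phi a x + phi a l" using phiadd[OF xM lM] unfolding l_def by simp
      hence e: "phi a x = phi a u - phi a l" by (simp add: algebra_simps)
      have puM: "phi a u \<in> M (tgt a)" using phiM[OF uM] .
      have plL: "phi a l \<in> L (tgt a)" using Lphi[OF lL] .
      have plM: "phi a l \<in> M (tgt a)" using plL Lsub(2) by blast
      have "z = P (tgt a) (phi a x)" unfolding u(2) x_def qmap_def ..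
      also have "\<dots> = P (tgt a) (phi a u) - P (tgt a) (phi a l)" unfolding e using P_diff[OF puM plM] .
      also have "\<dots> = P (tgt a) (phi a u)" using P_L[OF plL] by simp
      finally show "z \<in> V (tgt a)" unfolding V_def using Uphi[OF u(1)] by blast
    qed
  qed
  have "dim (U v) = dim (U' v) + dim (V v)" for v
  proof -
    obtain F where F: "finite F" "M v \<subseteq> span F" by (rule Mspan)
    have U'U: "U' v \<subseteq> U v" unfolding U'_def by blast
    have USF: "U v \<subseteq> span F" using Us(2) F(2) by blast
    obtain D where D: "subspace D" "D \<subseteq> U v" "D \<inter> U' v \<subseteq> {0}" "{x + y |x y. x \<in> D \<and> y \<in> U' v} = U v"
      using complement_exists[OF U's Us(1) U'U USF F(1)] by auto
    have DSF: "D \<subseteq> span F" using D(2) USF by blast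
    have LSF: "L v \<subseteq> span F" using Lsub(2) F(2) by blast
    have VSF: "V v \<subseteq> span F" using VC C_M F(2) by blast
    have e1: "dim (U v) = dim D + dim (U' v)"
      using dim_direct_sum[OF D(1) U's DSF _ F(1) D(3)] U'U USF unfolding D(4) by blast
    have e2: "{x + y |x y. x \<in> D \<and> y \<in> L v} = {x + y |x y. x \<in> U v \<and> y \<in> L v}"
    proof (intro equalityI subsetI)
      fix z assume "z \<in> {x + y |x y. x \<in> D \<and> y \<in> L v}"
      then obtain x y where "z = x + y" "x \<in> D" "y \<in> L v" by blast
      thus "z \<in> {x + y |x y. x \<in> U v \<and> y \<in> L v}" using D(2) by blast
    next
      fix z assume "z \<in> {x + y |x y. x \<in> U v \<and> y \<in> L v}"
      then obtain x y where z: "z = x + y" "x \<in> U v" "y \<in> L v" by blast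
      hence "x \<in> {x + y |x y. x \<in> D \<and> y \<in> U' v}" using D(4) by simp
      then obtain d s where ds: "x = d + s" "d \<in> D" "s \<in> U' v" by blast
      have "s + y \<in> L v" using subspace_add[OF Lsub(1)] ds(3) z(3) unfolding U'_def by blast
      moreover have "z = d + (s + y)" using z(1) ds(1) by (simp add: add.assoc)
      ultimately show "z \<in> {x + y |x y. x \<in> D \<and> y \<in> L v}" using ds(2) by blast
    qed
    have e3: "D \<inter> L v \<subseteq> {0}" using D(2,3) unfolding U'_def by blast
    have e4: "dim {x + y |x y. x \<in> U v \<and> y \<in> L v} = dim D + dim (L v)"
      using dim_direct_sum[OF D(1) Lsub(1) DSF LSF F(1) e3] unfolding e2 .
    have e5: "{x + y |x y. x \<in> V v \<and> y \<in> L v} = {x + y |x y. x \<in> U v \<and> y \<in> L v}"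
    proof (intro equalityI subsetI)
      fix z assume "z \<in> {x + y |x y. x \<in> V v \<and> y \<in> L v}"
      then obtain x y where z: "z = x + y" "x \<in> V v" "y \<in> L v" by blast
      then obtain u where u: "u \<in> U v" "x = P v u" unfolding V_def by blast
      have l: "u - P v u \<in> L v" using P_props(2) UM u(1) by blast
      have "y - (u - P v u) \<in> L v" using subspace_diff[OF Lsub(1) z(3) l] .
      moreover have "z = u + (y - (u - P v u))" using z(1) u(2) by (simp add: algebra_simps)
      ultimately show "z \<in> {x + y |x y. x \<in> U v \<and> y \<in> L v}" using u(1) by blast
    next
      fix z assume "z \<in> {x + y |x y. x \<in> U v \<and> y \<in> L v}"
      then obtain x y where z: "z = x + y" "x \<in> U v" "y \<in> L v" by blast
      have l: "x - P v x \<in> L v" using P_props(2) UM z(2) by blast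
      have "(x - P v x) + y \<in> L v" using subspace_add[OF Lsub(1) l z(3)] .
      moreover have "z = P v x + ((x - P v x) + y)" using z(1) by (simp add: algebra_simps)
      moreover have "P v x \<in> V v" unfolding V_def using z(2) by blast
      ultimately show "z \<in> {x + y |x y. x \<in> V v \<and> y \<in> L v}" by blast
    qed
    have e6: "V v \<inter> L v \<subseteq> {0}" using VC[of v] C_L[of v] by auto
    have e7: "dim {x + y |x y. x \<in> U v \<and> y \<in> L v} = dim (V v) + dim (L v)"
      using dim_direct_sum[OF Vs Lsub(1) VSF LSF F(1) e6] unfolding e5 .
    show ?thesis using e1 e4 e7 by simp
  qed
  hence "dimvec smul U = dimvec smul U' + dimvec smul V"
    unfolding dimvec_def by (simp add: vec_eq_iff)
  thus ?thesis using r1 r2 by (intro exI[of _ U'] exI[of _ V] conjI)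
qed

end

lemma hull_le:
  fixes d :: "real ^ 'n"
  shows "(\<forall>x\<in>convex hull G. d \<bullet> x \<le> c) \<longleftrightarrow> (\<forall>x\<in>G. d \<bullet> x \<le> c)"
proof
  assume "\<forall>x\<in>G. d \<bullet> x \<le> c"
  hence "convex hull G \<subseteq> {x. d \<bullet> x \<le> c}"
    by (intro hull_minimal) (auto simp: convex_halfspace_le)
  thus "\<forall>x\<in>convex hull G. d \<bullet> x \<le> c" by blast
qed (auto intro: hull_inc)

theorem proposition4p9:
  fixes smul :: "'k::field_char_0 \<Rightarrow> 'm::ab_group_add \<Rightarrow> 'm"
    and src tgt :: "'e::finite \<Rightarrow> 'q::finite"
    and I :: "('q \<times> 'q \<times> 'e list \<Rightarrow> 'k) set"
    and M L :: "'q \<Rightarrow> 'm set"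
    and phi :: "'e \<Rightarrow> 'm \<Rightarrow> 'm"
  assumes alg_closed: "\<forall>p :: 'k poly. degree p > 0 \<longrightarrow> (\<exists>x. poly p x = 0)"
    and vs: "vector_space smul"
    and adm: "admissible_ideal src tgt I"
    and rep: "is_rep smul src tgt I M phi"
    and vert: "vertex_subrep smul src tgt M phi L"
  shows "normal_cone smul src tgt M phi (dimvec smul L) =
           normal_cone smul src tgt (qspace smul M L) (qmap smul tgt M phi L) 0
         \<inter> normal_cone smul src tgt L phi (dimvec smul L)"
proof -
  have qr: "is_quiver_rep smul src tgt M phi" using rep unfolding is_rep_def by simp
  interpret vector_space smul by (rule vs)
  interpret qsetup smul src tgt M L phi
  proof unfold_locales
    show "\<And>v. subspace (M v)" using qr unfolding is_quiver_rep_def by simp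
    show "\<And>v. \<exists>B. finite B \<and> B \<subseteq> M v \<and> span B = M v" using qr unfolding is_quiver_rep_def by simp
    show "\<And>a x. x \<in> M (src a) \<Longrightarrow> phi a x \<in> M (tgt a)" using qr unfolding is_quiver_rep_def by blast
    show "\<And>a x y. x \<in> M (src a) \<Longrightarrow> y \<in> M (src a) \<Longrightarrow> phi a (x + y) = phi a x + phi a y"
      using qr unfolding is_quiver_rep_def by blast
    show "subrep smul src tgt M phi L" using vert unfolding vertex_subrep_def by simp
  qed
  show ?thesis
  proof (rule set_eqI)
    fix d :: "real ^ 'q"
    let ?dL = "dimvec smul L"
    have A: "d \<in> normal_cone smul src tgt M phi ?dL \<longleftrightarrow>
      (\<forall>U. subrep smul src tgt M phi U \<longrightarrow> d \<bullet> dimvec smul U \<le> d \<bullet> ?dL)"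
      unfolding normal_cone_def newton_def mem_Collect_eq hull_le by blast
    have B: "d \<in> normal_cone smul src tgt C Q 0 \<longleftrightarrow>
      (\<forall>V. subrep smul src tgt C Q V \<longrightarrow> d \<bullet> dimvec smul V \<le> 0)"
      unfolding normal_cone_def newton_def mem_Collect_eq hull_le by auto
    have D: "d \<in> normal_cone smul src tgt L phi ?dL \<longleftrightarrow>
      (\<forall>U. subrep smul src tgt L phi U \<longrightarrow> d \<bullet> dimvec smul U \<le> d \<bullet> ?dL)"
      unfolding normal_cone_def newton_def mem_Collect_eq hull_le by blast
    show "d \<in> normal_cone smul src tgt M phi ?dL \<longleftrightarrow>
      d \<in> normal_cone smul src tgt C Q 0 \<inter> normal_cone smul src tgt L phi ?dL"
      unfolding Int_iff A B D
    proof safe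
      fix V assume H: "\<forall>U. subrep smul src tgt M phi U \<longrightarrow> d \<bullet> dimvec smul U \<le> d \<bullet> ?dL"
        and V: "subrep smul src tgt C Q V"
      obtain W where W: "subrep smul src tgt M phi W" "dimvec smul W = dimvec smul V + ?dL"
        using K1[OF V] by blast
      have "d \<bullet> dimvec smul W \<le> d \<bullet> ?dL" using H W(1) by blast
      thus "d \<bullet> dimvec smul V \<le> 0" unfolding W(2) by (simp add: inner_add_right)
    next
      fix U assume H: "\<forall>U. subrep smul src tgt M phi U \<longrightarrow> d \<bullet> dimvec smul U \<le> d \<bullet> ?dL"
        and U: "subrep smul src tgt L phi U"
      show "d \<bullet> dimvec smul U \<le> d \<bullet> ?dL" using H K3[OF U] by blast
    next
      fix U assume H1: "\<forall>V. subrep smul src tgt C Q V \<longrightarrow> d \<bullet> dimvec smul V \<le> 0"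
        and H2: "\<forall>U. subrep smul src tgt L phi U \<longrightarrow> d \<bullet> dimvec smul U \<le> d \<bullet> ?dL"
        and U: "subrep smul src tgt M phi U"
      obtain U' V where UV: "subrep smul src tgt L phi U'" "subrep smul src tgt C Q V"
        "dimvec smul U = dimvec smul U' + dimvec smul V" using K2[OF U] by blast
      have "d \<bullet> dimvec smul U = d \<bullet> dimvec smul U' + d \<bullet> dimvec smul V"
        using UV(3) by (simp add: inner_add_right)
      thus "d \<bullet> dimvec smul U \<le> d \<bullet> ?dL" using H1 H2 UV(1,2) by fastforce
    qed
  qed
qed

end
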